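(* There is an absolute constant $\alpha>0$ (independent of $n,c,\Delta,V$) such that the following holds. Let $c>4$, $\Delta>0$, $n\ge 2$, and let $V$ be a real $d\times n$ matrix with columns $\vec v_1,\dots,\vec v_n\in\mathbb{R}^d$. Let $S=\{i\in[n]: \mathbf{E}[D_i]\le c\}$ be the set of vertices of expected degree at most $c$ in $G\sim\mathcal{G}_V$. Suppose the expected number of triangles of $G\sim\mathcal{G}_V$ all three of whose vertices lie in $S$ is at least $\Delta n$. Then $$\mathrm{rank}(V)\ \ge\ \alpha\,\frac{\Delta^4}{c^9}\cdot\frac{n}{\lg^2 n}.$$ (The paper phrases this as $\mathrm{rank}(V)\ge \min(1,\mathrm{poly}(\Delta/c))\, n/\lg^2 n$.)
   Context: For vectors $\vec v_1,\dots,\vec v_n\in\mathbb{R}^d$ (columns of a matrix $V$), $\mathcal{G}_V$ is the distribution on simple undirected graphs with vertex set $[n]$ in which, independently for each unordered pair $\{i,j\}$ with $i\neq j$, the edge $(i,j)$ is present with probability $p_{ij}=\max(0,\min(\vec v_i\cdot\vec v_j,1))$. $D_i$ denotes the (random) degree of vertex $i$, so $\mathbf{E}[D_i]=\sum_{j\ne i}p_{ij}$. A triangle is a set of three distinct vertices that are pairwise adjacent. $\lg$ denotes the base-2 logarithm. *)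

theory Defs
  imports "HOL-Probability.Probability" "Jordan_Normal_Form.DL_Rank"
begin

text \<open>Columns of V (a real d x n matrix, Jordan_Normal_Form type real mat) are
  indexed 0..n-1. Edges are unordered pairs {i,j} with i \<noteq> j.\<close>

definition edge_prob :: "real mat \<Rightarrow> nat \<Rightarrow> nat \<Rightarrow> real" where
  "edge_prob V i j = max 0 (min (col V i \<bullet> col V j) 1)"

definition vertex_pairs :: "nat \<Rightarrow> nat set set" where
  "vertex_pairs n = {e. \<exists>i<n. \<exists>j<n. i \<noteq> j \<and> e = {i, j}}"

definition graph_pmf :: "real mat \<Rightarrow> nat set set pmf" where
  "graph_pmf V =
     map_pmf (\<lambda>b. {e \<in> vertex_pairs (dim_col V). b e})
       (Pi_pmf (vertex_pairs (dim_col V)) False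
          (\<lambda>e. bernoulli_pmf (edge_prob V (Min e) (Max e))))"

definition degree :: "nat set set \<Rightarrow> nat \<Rightarrow> nat" where
  "degree E i = card {j. {i, j} \<in> E \<and> j \<noteq> i}"

definition expected_degree :: "real mat \<Rightarrow> nat \<Rightarrow> real" where
  "expected_degree V i = measure_pmf.expectation (graph_pmf V) (\<lambda>E. real (degree E i))"

definition triangles_in :: "nat set set \<Rightarrow> nat set \<Rightarrow> nat set set" where
  "triangles_in E S = {T. T \<subseteq> S \<and> card T = 3 \<and> (\<forall>i\<in>T. \<forall>j\<in>T. i \<noteq> j \<longrightarrow> {i, j} \<in> E)}"

definition low_degree_set :: "real mat \<Rightarrow> real \<Rightarrow> nat set" where
  "low_degree_set V c = {i. i < dim_col V \<and> expected_degree V i \<le> c}"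

end

theory Submission
  imports Defs
begin

lemma trace_ineq:
  fixes z :: "nat \<Rightarrow> nat \<Rightarrow> real"
  assumes fin: "finite R"
  shows "(\<Sum>i\<in>R. \<Sum>k<r. (z i k)^2)^2 \<le> real r * (\<Sum>i\<in>R. \<Sum>j\<in>R. (\<Sum>k<r. z i k * z j k)^2)"
proof -
  define X where "X k l = (\<Sum>i\<in>R. z i k * z i l)" for k l
  have e1: "(\<Sum>i\<in>R. \<Sum>k<r. (z i k)^2) = (\<Sum>k<r. X k k)"
    unfolding X_def power2_eq_square by (rule sum.swap)
  have cs: "(\<Sum>k<r. X k k)^2 \<le> real r * (\<Sum>k<r. (X k k)^2)"
    using Cauchy_Schwarz_ineq_sum[of "\<lambda>k. X k k" "\<lambda>_. 1" "{..<r}"] by (simp add: mult.commute)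
  have le: "(\<Sum>k<r. (X k k)^2) \<le> (\<Sum>k<r. \<Sum>l<r. (X k l)^2)"
    by (intro sum_mono member_le_sum) auto
  have eq: "(\<Sum>k<r. \<Sum>l<r. (X k l)^2) = (\<Sum>i\<in>R. \<Sum>j\<in>R. (\<Sum>k<r. z i k * z j k)^2)"
  proof -
    have "(\<Sum>k<r. \<Sum>l<r. (X k l)^2) = (\<Sum>k<r. \<Sum>l<r. \<Sum>i\<in>R. \<Sum>j\<in>R. z i k * z i l * (z j k * z j l))"
      unfolding X_def power2_eq_square sum_product by simp
    also have "\<dots> = (\<Sum>i\<in>R. \<Sum>j\<in>R. \<Sum>k<r. \<Sum>l<r. z i k * z i l * (z j k * z j l))"
    proof -
      have "(\<Sum>k<r. \<Sum>l<r. \<Sum>i\<in>R. \<Sum>j\<in>R. z i k * z i l * (z j k * z j l))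
          = (\<Sum>k<r. \<Sum>i\<in>R. \<Sum>l<r. \<Sum>j\<in>R. z i k * z i l * (z j k * z j l))"
        by (rule sum.cong[OF refl], rule sum.swap)
      also have "\<dots> = (\<Sum>k<r. \<Sum>i\<in>R. \<Sum>j\<in>R. \<Sum>l<r. z i k * z i l * (z j k * z j l))"
        by (rule sum.cong[OF refl], rule sum.cong[OF refl], rule sum.swap)
      also have "\<dots> = (\<Sum>i\<in>R. \<Sum>k<r. \<Sum>j\<in>R. \<Sum>l<r. z i k * z i l * (z j k * z j l))"
        by (rule sum.swap)
      also have "\<dots> = (\<Sum>i\<in>R. \<Sum>j\<in>R. \<Sum>k<r. \<Sum>l<r. z i k * z i l * (z j k * z j l))"
        by (rule sum.cong[OF refl], rule sum.swap)
      finally show ?thesis .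
    qed
    also have "\<dots> = (\<Sum>i\<in>R. \<Sum>j\<in>R. (\<Sum>k<r. z i k * z j k)^2)"
      unfolding power2_eq_square sum_product by (simp add: mult_ac)
    finally show ?thesis .
  qed
  have "real r * (\<Sum>k<r. (X k k)^2) \<le> real r * (\<Sum>k<r. \<Sum>l<r. (X k l)^2)"
    by (rule mult_left_mono[OF le]) simp
  then show ?thesis using e1 cs eq by simp
qed



definition dotf :: "nat \<Rightarrow> (nat \<Rightarrow> real) \<Rightarrow> (nat \<Rightarrow> real) \<Rightarrow> real" where
  "dotf d x y = (\<Sum>l<d. x l * y l)"

lemma dotf_comm: "dotf d x y = dotf d y x"
  unfolding dotf_def by (simp add: mult.commute)

lemma dotf_self_nonneg: "0 \<le> dotf d x x"
  unfolding dotf_def by (intro sum_nonneg) simp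

lemma dotf_self_zero: "dotf d x x = 0 \<Longrightarrow> dotf d x z = 0"
proof -
  assume "dotf d x x = 0"
  hence "\<forall>l\<in>{..<d}. x l * x l = 0"
    using sum_nonneg_eq_0_iff[of "{..<d}" "\<lambda>l. x l * x l"] unfolding dotf_def by simp
  thus ?thesis unfolding dotf_def by simp
qed

lemma dotf_scale: "dotf d (\<lambda>l. x l / s) z = dotf d x z / s"
  unfolding dotf_def by (simp add: sum_divide_distrib)

lemma gs:
  fixes bs :: "(nat \<Rightarrow> real) list"
  shows "\<exists>es. length es \<le> length bs \<and>
    (\<forall>k<length es. \<forall>l<length es. dotf d (es!k) (es!l) = (if k = l then 1 else 0)) \<and>
    (\<forall>b\<in>set bs. \<forall>z. dotf d b z = (\<Sum>k<length es. dotf d b (es!k) * dotf d z (es!k)))"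
proof (induction bs)
  case Nil
  show ?case by (intro exI[of _ "[]"]) simp
next
  case (Cons b bs)
  then obtain es where len: "length es \<le> length bs"
    and on: "\<forall>k<length es. \<forall>l<length es. dotf d (es!k) (es!l) = (if k = l then 1 else 0)"
    and pv: "\<forall>b\<in>set bs. \<forall>z. dotf d b z = (\<Sum>k<length es. dotf d b (es!k) * dotf d z (es!k))"
    by blast
  define m where "m = length es"
  define cf where "cf k = dotf d b (es!k)" for k
  define p where "p l = b l - (\<Sum>k<m. cf k * (es!k) l)" for l
  have dp: "dotf d p z = dotf d b z - (\<Sum>k<m. cf k * dotf d (es!k) z)" for z
  proof -
    have "dotf d p z = (\<Sum>l<d. b l * z l) - (\<Sum>l<d. \<Sum>k<m. cf k * (es!k) l * z l)"
      unfolding p_def dotf_def by (simp add: left_diff_distrib sum_subtractf sum_distrib_right)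
    also have "(\<Sum>l<d. \<Sum>k<m. cf k * (es!k) l * z l) = (\<Sum>k<m. cf k * dotf d (es!k) z)"
      unfolding dotf_def by (subst sum.swap) (simp add: sum_distrib_left mult_ac)
    finally show ?thesis unfolding dotf_def by simp
  qed
  have dpe: "dotf d p (es!j) = 0" if "j < m" for j
  proof -
    have "(\<Sum>k<m. cf k * dotf d (es!k) (es!j)) = (\<Sum>k<m. if k = j then cf k else 0)"
      using on that m_def by (intro sum.cong) auto
    also have "\<dots> = cf j" using that by simp
    finally show ?thesis using dp cf_def by simp
  qed
  show ?case
  proof (cases "dotf d p p = 0")
    case True
    hence p0: "dotf d p z = 0" for z by (rule dotf_self_zero)
    have "dotf d b z = (\<Sum>k<m. dotf d b (es!k) * dotf d z (es!k))" for z
      using dp[of z] p0[of z] unfolding cf_def by (simp add: dotf_comm[of d "es!_" z])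
    hence Pb: "\<forall>z. dotf d b z = (\<Sum>k<length es. dotf d b (es!k) * dotf d z (es!k))"
      unfolding m_def by blast
    have "\<forall>b'\<in>set (b#bs). \<forall>z. dotf d b' z = (\<Sum>k<length es. dotf d b' (es!k) * dotf d z (es!k))"
    proof
      fix b' assume "b' \<in> set (b#bs)"
      hence "b' = b \<or> b' \<in> set bs" by simp
      thus "\<forall>z. dotf d b' z = (\<Sum>k<length es. dotf d b' (es!k) * dotf d z (es!k))"
        using Pb pv by blast
    qed
    moreover have "length es \<le> length (b#bs)" using len by simp
    ultimately show ?thesis using on by blast
  next
    case False
    define s where "s = sqrt (dotf d p p)"
    have s0: "s > 0" using False dotf_self_nonneg[of d p] s_def by simp
    have ss: "s * s = dotf d p p" using dotf_self_nonneg[of d p] s_def by simp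
    define e where "e l = p l / s" for l
    have de: "dotf d e z = dotf d p z / s" for z unfolding e_def by (rule dotf_scale)
    have dee: "dotf d e e = 1"
      using de[of e] dotf_comm[of d e p] de[of p] ss s0 by (simp add: field_simps)
    have deo: "dotf d e (es!j) = 0" if "j < m" for j using de dpe that by simp
    have doe: "dotf d (es!j) e = 0" if "j < m" for j using deo that dotf_comm by metis
    define es' where "es' = es @ [e]"
    have nth': "es'!k = (if k < m then es!k else e)" if "k < Suc m" for k
      using that unfolding es'_def m_def by (simp add: nth_append)
    have len': "length es' = Suc m" unfolding es'_def m_def by simp
    have on': "\<forall>k<length es'. \<forall>l<length es'. dotf d (es'!k) (es'!l) = (if k = l then 1 else 0)"
    proof (intro allI impI)
      fix k l assume k: "k < length es'" and l: "l < length es'"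
      show "dotf d (es'!k) (es'!l) = (if k = l then 1 else 0)"
        using k l len' nth'[of k] nth'[of l] on m_def deo doe dee
        by (cases "k < m"; cases "l < m") auto
    qed
    have sumS: "(\<Sum>k<length es'. f k) = (\<Sum>k<m. f k) + f m" for f :: "nat \<Rightarrow> real"
      using len' by simp
    have pvb: "dotf d b z = (\<Sum>k<length es'. dotf d b (es'!k) * dotf d z (es'!k))" for z
    proof -
      have dbe: "dotf d b e = s"
      proof -
        have "(\<Sum>k<m. cf k * dotf d (es!k) e) = 0" using doe by simp
        hence "dotf d b e = dotf d p e" using dp[of e] by simp
        also have "\<dots> = dotf d e p" by (rule dotf_comm)
        also have "\<dots> = dotf d p p / s" by (rule de)
        also have "\<dots> = s" using s0 by (simp add: ss[symmetric])
        finally show ?thesis .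
      qed
      have "dotf d b z = dotf d p z + (\<Sum>k<m. cf k * dotf d (es!k) z)" using dp[of z] by simp
      also have "dotf d p z = dotf d b e * dotf d z e"
        using dbe de[of z] dotf_comm[of d e z] s0 by simp
      also have "(\<Sum>k<m. cf k * dotf d (es!k) z) = (\<Sum>k<m. dotf d b (es'!k) * dotf d z (es'!k))"
        unfolding cf_def using nth' by (intro sum.cong) (auto simp: dotf_comm[of d _ z])
      finally show ?thesis using sumS nth'[of m] by simp
    qed
    have pvo: "dotf d b' z = (\<Sum>k<length es'. dotf d b' (es'!k) * dotf d z (es'!k))"
      if b': "b' \<in> set bs" for b' z
    proof -
      have "dotf d b' e = (\<Sum>k<m. dotf d b' (es!k) * dotf d e (es!k))" using pv b' m_def by blast
      also have "\<dots> = 0" using deo by simp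
      finally have z: "dotf d b' e = 0" .
      have "dotf d b' z = (\<Sum>k<m. dotf d b' (es!k) * dotf d z (es!k))" using pv b' m_def by blast
      also have "\<dots> = (\<Sum>k<m. dotf d b' (es'!k) * dotf d z (es'!k))"
        using nth' by (intro sum.cong) auto
      finally show ?thesis using sumS nth'[of m] z by simp
    qed
    have "\<forall>b'\<in>set (b#bs). \<forall>z. dotf d b' z = (\<Sum>k<length es'. dotf d b' (es'!k) * dotf d z (es'!k))"
    proof
      fix b' assume "b' \<in> set (b#bs)"
      hence "b' = b \<or> b' \<in> set bs" by simp
      thus "\<forall>z. dotf d b' z = (\<Sum>k<length es'. dotf d b' (es'!k) * dotf d z (es'!k))"
        using pvb pvo by blast
    qed
    moreover have "length es' \<le> length (b#bs)" using len len' m_def by simp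
    ultimately show ?thesis using on' by blast
  qed
qed


lemma parseval_comb:
  fixes f :: "'v \<Rightarrow> nat \<Rightarrow> real" and e :: "nat \<Rightarrow> nat \<Rightarrow> real"
  assumes fin: "finite A"
    and pv: "\<forall>x\<in>A. \<forall>z. dotf d (f x) z = (\<Sum>k<m. dotf d (f x) (e k) * dotf d z (e k))"
    and w: "\<forall>l<d. w l = (\<Sum>x\<in>A. a x * f x l)"
  shows "dotf d w z = (\<Sum>k<m. dotf d w (e k) * dotf d z (e k))"
proof -
  have lin: "dotf d w u = (\<Sum>x\<in>A. a x * dotf d (f x) u)" for u
  proof -
    have "dotf d w u = (\<Sum>l<d. (\<Sum>x\<in>A. a x * f x l) * u l)"
      unfolding dotf_def using w by (intro sum.cong) auto
    also have "\<dots> = (\<Sum>l<d. \<Sum>x\<in>A. a x * (f x l * u l))"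
      by (simp add: sum_distrib_right mult.assoc)
    also have "\<dots> = (\<Sum>x\<in>A. \<Sum>l<d. a x * (f x l * u l))"
      by (rule sum.swap)
    also have "\<dots> = (\<Sum>x\<in>A. a x * dotf d (f x) u)"
      unfolding dotf_def by (simp add: sum_distrib_left)
    finally show ?thesis .
  qed
  have pvx: "\<And>x. x \<in> A \<Longrightarrow> dotf d (f x) z = (\<Sum>k<m. dotf d (f x) (e k) * dotf d z (e k))"
    using pv by blast
  have "dotf d w z = (\<Sum>x\<in>A. a x * dotf d (f x) z)" by (rule lin)
  also have "\<dots> = (\<Sum>x\<in>A. a x * (\<Sum>k<m. dotf d (f x) (e k) * dotf d z (e k)))"
    by (intro sum.cong refl) (simp only: pvx)
  also have "\<dots> = (\<Sum>x\<in>A. \<Sum>k<m. a x * dotf d (f x) (e k) * dotf d z (e k))"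
    by (simp add: sum_distrib_left mult.assoc)
  also have "\<dots> = (\<Sum>k<m. \<Sum>x\<in>A. a x * dotf d (f x) (e k) * dotf d z (e k))"
    by (rule sum.swap)
  also have "\<dots> = (\<Sum>k<m. (\<Sum>x\<in>A. a x * dotf d (f x) (e k)) * dotf d z (e k))"
    by (simp add: sum_distrib_right)
  also have "\<dots> = (\<Sum>k<m. dotf d w (e k) * dotf d z (e k))"
    using lin by simp
  finally show ?thesis .
qed

lemma scalar_prod_dotf:
  assumes "v \<in> carrier_vec d" "w \<in> carrier_vec d"
  shows "v \<bullet> w = dotf d (\<lambda>l. v $ l) (\<lambda>l. w $ l)"
  using assms unfolding scalar_prod_def dotf_def by (simp add: atLeast0LessThan)

lemma rank_gram:
  fixes V :: "real mat"
  assumes V: "V \<in> carrier_mat d n"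
  shows "\<exists>r y. r \<le> vec_space.rank d V \<and>
           (\<forall>i<n. \<forall>j<n. col V i \<bullet> col V j = (\<Sum>k<r. y i k * y j k))"
proof -
  interpret vs: vec_space "TYPE(real)" d .
  have colsC: "set (cols V) \<subseteq> carrier_vec d" using V cols_dim by blast
  have li0: "vs.lin_indpt {}" unfolding vs.lin_dep_def by simp
  obtain S where finS: "finite S" and maxS: "maximal S (\<lambda>T. T \<subseteq> set (cols V) \<and> vs.lin_indpt T)"
    using maximal_exists_superset[of "set (cols V)" "\<lambda>T. T \<subseteq> set (cols V) \<and> vs.lin_indpt T" "{}"]
      li0 by auto
  have rk: "vs.rank V = card S" using vs.rank_card_indpt[OF V maxS] .
  have SsubC: "S \<subseteq> set (cols V)" and li: "vs.lin_indpt S"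
    using maxS unfolding maximal_def by auto
  have Scar: "S \<subseteq> carrier_vec d" using SsubC colsC by blast
  have inspan: "v \<in> vs.span S" if v: "v \<in> set (cols V)" for v
  proof (rule ccontr)
    assume nv: "v \<notin> vs.span S"
    have vS: "v \<notin> S" using nv vs.in_own_span[OF Scar] by blast
    have vC: "v \<in> carrier_vec d" using v colsC by blast
    have "vs.lin_indpt (S \<union> {v})" using vs.lin_dep_iff_in_span[OF Scar li vC vS] nv by simp
    moreover have "S \<union> {v} \<subseteq> set (cols V)" using SsubC v by blast
    ultimately have "S \<union> {v} = S" using maxS unfolding maximal_def by blast
    thus False using vS by blast
  qed
  obtain bs where bs: "set bs = S" "distinct bs" using finite_distinct_list[OF finS] by blast
  have lbs: "length bs = card S" using bs distinct_card by metis
  obtain es where len: "length es \<le> length (map (\<lambda>v l. v $ l) bs)"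
    and pv: "\<forall>b\<in>set (map (\<lambda>v l. v $ l) bs). \<forall>z. dotf d b z = (\<Sum>k<length es. dotf d b (es!k) * dotf d z (es!k))"
    using gs[where d=d and bs="map (\<lambda>v l. v $ l) bs"] by blast
  define y where "y i k = dotf d (\<lambda>l. col V i $ l) (es!k)" for i k
  have pcol: "dotf d (\<lambda>l. col V i $ l) z = (\<Sum>k<length es. y i k * dotf d z (es!k))" if i: "i < n" for i z
  proof -
    have "col V i \<in> set (cols V)" using i V by (simp add: cols_def)
    hence "col V i \<in> vs.span S" by (rule inspan)
    then obtain a A where A: "A \<subseteq> S" and lc: "vs.lincomb a A = col V i"
      unfolding vs.span_def mem_Collect_eq by (elim exE conjE) (rule that; simp)
    have finA: "finite A" using A finS finite_subset by blast
    have Acar: "A \<subseteq> carrier_vec d" using A Scar by blast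
    have w: "\<forall>l<d. col V i $ l = (\<Sum>x\<in>A. a x * x $ l)"
      using vs.lincomb_index[OF _ Acar] lc by metis
    have pvA: "\<forall>x\<in>A. \<forall>z. dotf d (\<lambda>l. x $ l) z = (\<Sum>k<length es. dotf d (\<lambda>l. x $ l) (es!k) * dotf d z (es!k))"
    proof
      fix x assume "x \<in> A"
      hence "(\<lambda>l. x $ l) \<in> set (map (\<lambda>v l. v $ l) bs)" using A bs(1) by auto
      thus "\<forall>z. dotf d (\<lambda>l. x $ l) z = (\<Sum>k<length es. dotf d (\<lambda>l. x $ l) (es!k) * dotf d z (es!k))"
        using pv by blast
    qed
    show ?thesis unfolding y_def
      using parseval_comb[where A=A and d=d and f="\<lambda>(x::real Matrix.vec) l. x $ l" and m="length es" and e="\<lambda>k. es!k" and w="\<lambda>l. col V i $ l" and a=a and z=z, OF finA pvA w] .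
  qed
  have "\<forall>i<n. \<forall>j<n. col V i \<bullet> col V j = (\<Sum>k<length es. y i k * y j k)"
  proof (intro allI impI)
    fix i j assume i: "i < n" and j: "j < n"
    have "col V i \<bullet> col V j = dotf d (\<lambda>l. col V i $ l) (\<lambda>l. col V j $ l)"
      using V by (intro scalar_prod_dotf) auto
    also have "\<dots> = (\<Sum>k<length es. y i k * dotf d (\<lambda>l. col V j $ l) (es!k))"
      by (rule pcol[OF i])
    also have "\<dots> = (\<Sum>k<length es. y i k * y j k)"
      by (simp only: y_def)
    finally show "col V i \<bullet> col V j = (\<Sum>k<length es. y i k * y j k)" .
  qed
  moreover have "length es \<le> vec_space.rank d V" using len lbs rk by simp
  ultimately show ?thesis by blast
qed




lemma ep_bounds: "0 \<le> edge_prob V i j" "edge_prob V i j \<le> 1"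
  unfolding edge_prob_def by auto

lemma ep_sym: "edge_prob V i j = edge_prob V j i"
  unfolding edge_prob_def using comm_scalar_prod[OF col_dim col_dim] by metis

lemma ep_minmax: "edge_prob V (Min {i, j}) (Max {i, j}) = edge_prob V i j"
  by (cases "i \<le> j") (auto simp: max_def min_def ep_sym)

lemma ep_minmax2: "edge_prob V (min i j) (max i j) = edge_prob V i j"
  by (cases "i \<le> j") (auto simp: max_def min_def ep_sym)

lemma VP_mem: "{i, j} \<in> vertex_pairs n \<longleftrightarrow> i < n \<and> j < n \<and> i \<noteq> j"
  unfolding vertex_pairs_def by (auto simp: doubleton_eq_iff)

lemma VP_fin: "finite (vertex_pairs n)"
proof -
  have "vertex_pairs n \<subseteq> Pow {..<n}" unfolding vertex_pairs_def by auto
  thus ?thesis by (rule finite_subset) simp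
qed

definition gP :: "real mat \<Rightarrow> (nat set \<Rightarrow> bool) pmf" where
  "gP V = Pi_pmf (vertex_pairs (dim_col V)) False
          (\<lambda>e. bernoulli_pmf (edge_prob V (Min e) (Max e)))"

lemma graph_pmf_alt: "graph_pmf V = map_pmf (\<lambda>b. {e \<in> vertex_pairs (dim_col V). b e}) (gP V)"
  unfolding graph_pmf_def gP_def ..

lemma gP_fin: "finite (set_pmf (gP V))"
proof -
  have "set_pmf (gP V) \<subseteq> {f. \<forall>x. x \<notin> vertex_pairs (dim_col V) \<longrightarrow> f x = False}"
    unfolding gP_def by (rule set_Pi_pmf_subset[OF VP_fin])
  also have "\<dots> = PiE_dflt (vertex_pairs (dim_col V)) False (\<lambda>_. UNIV)"
    unfolding PiE_dflt_def by auto
  finally have "set_pmf (gP V) \<subseteq> PiE_dflt (vertex_pairs (dim_col V)) False (\<lambda>_. UNIV)" .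
  moreover have "finite (PiE_dflt (vertex_pairs (dim_col V)) False (\<lambda>_. (UNIV :: bool set)))"
    using VP_fin by (intro finite_PiE_dflt) auto
  ultimately show ?thesis by (rule finite_subset)
qed

lemma graph_fin: "finite (set_pmf (graph_pmf V))"
  unfolding graph_pmf_alt using gP_fin by simp

lemma graph_int: "integrable (measure_pmf (graph_pmf V)) (f :: nat set set \<Rightarrow> real)"
  by (rule integrable_measure_pmf_finite[OF graph_fin])

lemma graph_support: "E \<in> set_pmf (graph_pmf V) \<Longrightarrow> E \<subseteq> vertex_pairs (dim_col V)"
  unfolding graph_pmf_alt by auto

lemma exp_prod:
  assumes F: "F \<subseteq> vertex_pairs (dim_col V)"
  shows "measure_pmf.expectation (graph_pmf V) (\<lambda>E. \<Prod>e\<in>F. of_bool (e \<in> E))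
         = (\<Prod>e\<in>F. edge_prob V (Min e) (Max e))"
proof -
  let ?VP = "vertex_pairs (dim_col V)"
  let ?f = "\<lambda>e (v::bool). if e \<in> F then (of_bool v :: real) else 1"
  have "measure_pmf.expectation (graph_pmf V) (\<lambda>E. \<Prod>e\<in>F. of_bool (e \<in> E))
      = measure_pmf.expectation (gP V) (\<lambda>b. \<Prod>e\<in>F. (of_bool (e \<in> {e \<in> ?VP. b e}) :: real))"
    unfolding graph_pmf_alt
    by (rule integral_map_pmf[where g="\<lambda>b. {e \<in> ?VP. b e}" and f="\<lambda>E. \<Prod>e\<in>F. of_bool (e \<in> E)"])
  also have "\<dots> = measure_pmf.expectation (gP V) (\<lambda>b. \<Prod>e\<in>?VP. ?f e (b e))"
  proof (intro Bochner_Integration.integral_cong refl)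
    fix b :: "nat set \<Rightarrow> bool"
    have "(\<Prod>e\<in>F. of_bool (e \<in> {e \<in> ?VP. b e})) = (\<Prod>e\<in>F. (of_bool (b e) :: real))"
      using F by (intro prod.cong) auto
    also have "\<dots> = (\<Prod>e\<in>{e\<in>?VP. e \<in> F}. (of_bool (b e) :: real))"
      using F by (intro prod.cong) auto
    also have "\<dots> = (\<Prod>e\<in>?VP. ?f e (b e))"
      using VP_fin by (simp add: prod.inter_filter)
    finally show "(\<Prod>e\<in>F. of_bool (e \<in> {e \<in> ?VP. b e})) = (\<Prod>e\<in>?VP. ?f e (b e))" .
  qed
  also have "\<dots> = (\<Prod>e\<in>?VP. measure_pmf.expectation (bernoulli_pmf (edge_prob V (Min e) (Max e))) (?f e))"
    unfolding gP_def
    by (rule expectation_prod_Pi_pmf[OF VP_fin]) (auto intro!: integrable_measure_pmf_finite)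
  also have "\<dots> = (\<Prod>e\<in>?VP. if e \<in> F then edge_prob V (Min e) (Max e) else 1)"
    by (intro prod.cong refl) (simp add: ep_bounds)
  also have "\<dots> = (\<Prod>e\<in>{e\<in>?VP. e \<in> F}. edge_prob V (Min e) (Max e))"
    using VP_fin by (simp add: prod.inter_filter)
  also have "{e\<in>?VP. e \<in> F} = F" using F by auto
  finally show ?thesis .
qed

lemma exp_deg:
  assumes i: "i < dim_col V"
  shows "expected_degree V i = (\<Sum>j\<in>{..<dim_col V} - {i}. edge_prob V i j)"
proof -
  let ?n = "dim_col V"
  have pt: "real (degree E i) = (\<Sum>j\<in>{..<?n} - {i}. \<Prod>e\<in>{{i,j}}. of_bool (e \<in> E))"
    if E: "E \<in> set_pmf (graph_pmf V)" for E
  proof -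
    have Esub: "E \<subseteq> vertex_pairs ?n" using graph_support[OF E] .
    have "{j. {i, j} \<in> E \<and> j \<noteq> i} = ({..<?n} - {i}) \<inter> {j. {i,j} \<in> E}"
      using Esub VP_mem[of i _ ?n] by auto
    hence "real (degree E i) = real (card (({..<?n} - {i}) \<inter> {j. {i,j} \<in> E}))"
      unfolding degree_def by simp
    also have "\<dots> = (\<Sum>j\<in>{..<?n} - {i}. of_bool ({i,j} \<in> E))"
      by (subst sum_of_bool_eq) auto
    finally show ?thesis by simp
  qed
  have "expected_degree V i = measure_pmf.expectation (graph_pmf V)
          (\<lambda>E. \<Sum>j\<in>{..<?n} - {i}. \<Prod>e\<in>{{i,j}}. of_bool (e \<in> E))"
    unfolding expected_degree_def using pt
    by (intro integral_cong_AE) (auto simp: AE_measure_pmf_iff)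
  also have "\<dots> = (\<Sum>j\<in>{..<?n} - {i}. measure_pmf.expectation (graph_pmf V) (\<lambda>E. \<Prod>e\<in>{{i,j}}. of_bool (e \<in> E)))"
    by (rule Bochner_Integration.integral_sum) (rule graph_int)
  also have "\<dots> = (\<Sum>j\<in>{..<?n} - {i}. edge_prob V i j)"
  proof (intro sum.cong refl)
    fix j assume j: "j \<in> {..<?n} - {i}"
    have "{{i,j}} \<subseteq> vertex_pairs ?n" using j i VP_mem[of i j ?n] by auto
    thus "measure_pmf.expectation (graph_pmf V) (\<lambda>E. \<Prod>e\<in>{{i,j}}. of_bool (e \<in> E)) = edge_prob V i j"
      using exp_prod[of "{{i,j}}" V] ep_minmax by simp
  qed
  finally show ?thesis .
qed

definition tri_h :: "nat set set \<Rightarrow> nat \<Rightarrow> nat \<Rightarrow> nat \<Rightarrow> real" where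
  "tri_h E i j k = (if i \<noteq> j \<and> i \<noteq> k \<and> j \<noteq> k then \<Prod>e\<in>{{i,j},{i,k},{j,k}}. of_bool (e \<in> E) else 0)"

lemma card_tri_le:
  assumes finS: "finite S"
  shows "real (card (triangles_in E S)) \<le> (\<Sum>i\<in>S. \<Sum>j\<in>S. \<Sum>k\<in>S. tri_h E i j k)"
proof -
  define P where "P x = (case x of (i,j,k) \<Rightarrow> i \<noteq> j \<and> i \<noteq> k \<and> j \<noteq> k \<and> {i,j} \<in> E \<and> {i,k} \<in> E \<and> {j,k} \<in> E)" for x :: "nat \<times> nat \<times> nat"
  define X where "X = (S \<times> S \<times> S) \<inter> {x. P x}"
  have finX: "finite X" unfolding X_def using finS by simp
  have sub: "triangles_in E S \<subseteq> (\<lambda>(i,j,k). {i,j,k}) ` X"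
  proof
    fix T assume T: "T \<in> triangles_in E S"
    hence "card T = 3" unfolding triangles_in_def by simp
    then obtain x y z where Txyz: "T = {x,y,z}" "x \<noteq> y" "y \<noteq> z" "x \<noteq> z"
      unfolding card_3_iff by blast
    have "(x,y,z) \<in> X" using T Txyz unfolding triangles_in_def X_def P_def by auto
    thus "T \<in> (\<lambda>(i,j,k). {i,j,k}) ` X" using Txyz by force
  qed
  have "card (triangles_in E S) \<le> card ((\<lambda>(i,j,k). {i,j,k}) ` X)"
    using finX sub by (intro card_mono) auto
  also have "\<dots> \<le> card X" using finX by (rule card_image_le)
  finally have c1: "real (card (triangles_in E S)) \<le> real (card X)" by simp
  have "real (card X) = (\<Sum>x\<in>S \<times> S \<times> S. of_bool (P x))"
    unfolding X_def using finS by simp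
  also have "\<dots> = (\<Sum>i\<in>S. \<Sum>jk\<in>S \<times> S. of_bool (P (i, jk)))"
    by (simp add: sum.cartesian_product)
  also have "\<dots> = (\<Sum>i\<in>S. \<Sum>j\<in>S. \<Sum>k\<in>S. of_bool (P (i, j, k)))"
    by (simp add: sum.cartesian_product)
  also have "\<dots> = (\<Sum>i\<in>S. \<Sum>j\<in>S. \<Sum>k\<in>S. tri_h E i j k)"
  proof (intro sum.cong refl)
    fix i j k
    show "(of_bool (P (i, j, k)) :: real) = tri_h E i j k"
    proof (cases "i \<noteq> j \<and> i \<noteq> k \<and> j \<noteq> k")
      case True
      hence ne: "{i,j} \<noteq> {i,k}" "{i,j} \<noteq> {j,k}" "{i,k} \<noteq> {j,k}"
        by (auto simp: doubleton_eq_iff)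
      show ?thesis using True ne unfolding tri_h_def P_def by simp
    next
      case False thus ?thesis unfolding tri_h_def P_def by auto
    qed
  qed
  finally show ?thesis using c1 by simp
qed

lemma exp_tri:
  assumes S: "S \<subseteq> {..<dim_col V}"
  shows "measure_pmf.expectation (graph_pmf V) (\<lambda>E. real (card (triangles_in E S)))
    \<le> (\<Sum>i\<in>S. \<Sum>j\<in>S. \<Sum>k\<in>S. (if i = j then 0 else edge_prob V i j) *
           (if i = k then 0 else edge_prob V i k) * (if j = k then 0 else edge_prob V j k))"
proof -
  let ?n = "dim_col V"
  have finS: "finite S" using S finite_subset by blast
  have "measure_pmf.expectation (graph_pmf V) (\<lambda>E. real (card (triangles_in E S)))
      \<le> measure_pmf.expectation (graph_pmf V) (\<lambda>E. \<Sum>i\<in>S. \<Sum>j\<in>S. \<Sum>k\<in>S. tri_h E i j k)"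
    by (intro integral_mono graph_int card_tri_le[OF finS])
  also have "\<dots> = (\<Sum>i\<in>S. \<Sum>j\<in>S. \<Sum>k\<in>S. measure_pmf.expectation (graph_pmf V) (\<lambda>E. tri_h E i j k))"
    by (simp add: Bochner_Integration.integral_sum graph_int)
  also have "\<dots> = (\<Sum>i\<in>S. \<Sum>j\<in>S. \<Sum>k\<in>S. (if i = j then 0 else edge_prob V i j) *
           (if i = k then 0 else edge_prob V i k) * (if j = k then 0 else edge_prob V j k))"
  proof (intro sum.cong refl)
    fix i j k assume ijk: "i \<in> S" "j \<in> S" "k \<in> S"
    show "measure_pmf.expectation (graph_pmf V) (\<lambda>E. tri_h E i j k) =
      (if i = j then 0 else edge_prob V i j) * (if i = k then 0 else edge_prob V i k) * (if j = k then 0 else edge_prob V j k)"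
    proof (cases "i \<noteq> j \<and> i \<noteq> k \<and> j \<noteq> k")
      case True
      hence ne: "{i,j} \<noteq> {i,k}" "{i,j} \<noteq> {j,k}" "{i,k} \<noteq> {j,k}"
        by (auto simp: doubleton_eq_iff)
      have F: "{{i,j},{i,k},{j,k}} \<subseteq> vertex_pairs ?n"
        using ijk S True VP_mem by auto
      have "measure_pmf.expectation (graph_pmf V) (\<lambda>E. tri_h E i j k)
          = measure_pmf.expectation (graph_pmf V) (\<lambda>E. \<Prod>e\<in>{{i,j},{i,k},{j,k}}. of_bool (e \<in> E))"
        unfolding tri_h_def using True by simp
      also have "\<dots> = (\<Prod>e\<in>{{i,j},{i,k},{j,k}}. edge_prob V (Min e) (Max e))"
        by (rule exp_prod[OF F])
      also have "\<dots> = edge_prob V i j * edge_prob V i k * edge_prob V j k"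
        using ne by (simp add: ep_minmax ep_minmax2 mult.assoc)
      finally have X: "measure_pmf.expectation (graph_pmf V) (\<lambda>E. tri_h E i j k)
          = edge_prob V i j * edge_prob V i k * edge_prob V j k" .
      have Y: "(if i = j then 0 else edge_prob V i j) * (if i = k then 0 else edge_prob V i k) *
          (if j = k then 0 else edge_prob V j k) = edge_prob V i j * edge_prob V i k * edge_prob V j k"
        using True by simp
      show ?thesis unfolding Y by (rule X)
    next
      case False
      thus ?thesis unfolding tri_h_def by auto
    qed
  qed
  finally show ?thesis .
qed




lemma sum3_le_first:
  fixes q :: "nat \<Rightarrow> nat \<Rightarrow> real" and S :: "nat set" and c :: real
  assumes finS: "finite S"
    and nn: "\<And>i j. 0 \<le> q i j"
    and deg: "\<And>i. i \<in> S \<Longrightarrow> (\<Sum>j\<in>S. q i j) \<le> c"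
  shows "(\<Sum>i\<in>S. \<Sum>j\<in>S. \<Sum>k\<in>S. if P i then q i j * q i k else 0) \<le> real (card {i\<in>S. P i}) * c^2"
proof -
  have "(\<Sum>i\<in>S. \<Sum>j\<in>S. \<Sum>k\<in>S. if P i then q i j * q i k else 0)
      = (\<Sum>i\<in>S. if P i then (\<Sum>j\<in>S. q i j) * (\<Sum>k\<in>S. q i k) else 0)"
    by (intro sum.cong refl) (auto simp: sum_product)
  also have "\<dots> \<le> (\<Sum>i\<in>S. if P i then c^2 else 0)"
  proof (intro sum_mono)
    fix i assume i: "i \<in> S"
    have "0 \<le> (\<Sum>j\<in>S. q i j)" by (intro sum_nonneg nn)
    hence "(\<Sum>j\<in>S. q i j) * (\<Sum>k\<in>S. q i k) \<le> c * c"
      using deg[OF i] by (intro mult_mono) auto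
    thus "(if P i then (\<Sum>j\<in>S. q i j) * (\<Sum>k\<in>S. q i k) else 0) \<le> (if P i then c^2 else 0)"
      by (simp add: power2_eq_square)
  qed
  also have "\<dots> = (\<Sum>i\<in>{i\<in>S. P i}. c^2)"
    using sum.inter_filter[OF finS, of "\<lambda>_. c^2" P] by simp
  also have "\<dots> = real (card {i\<in>S. P i}) * c^2" by simp
  finally show ?thesis .
qed

lemma main_bound:
  fixes y q G :: "nat \<Rightarrow> nat \<Rightarrow> real" and S :: "nat set" and c \<Delta> :: real and n r :: nat
  assumes G_def: "\<And>i j. G i j = (\<Sum>k<r. y i k * y j k)"
    and S: "S \<subseteq> {..<n}" and c: "c \<ge> 1" and \<Delta>: "\<Delta> > 0" and n: "n > 0"
    and qdiag: "\<And>i. q i i = 0"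
    and qoff: "\<And>i j. i \<in> S \<Longrightarrow> j \<in> S \<Longrightarrow> i \<noteq> j \<Longrightarrow> q i j = max 0 (min (G i j) 1)"
    and q_sym: "\<And>i j. q i j = q j i" and q_nn: "\<And>i j. 0 \<le> q i j" and q_le1: "\<And>i j. q i j \<le> 1"
    and deg: "\<And>i. i \<in> S \<Longrightarrow> (\<Sum>j\<in>S. q i j) \<le> c"
    and tri: "\<Delta> * n \<le> (\<Sum>i\<in>S. \<Sum>j\<in>S. \<Sum>k\<in>S. q i j * q i k * q j k)"
  shows "\<Delta> \<le> c^2 \<and> \<Delta>^2 * n \<le> 32 * c^5 * r"
proof -
  have Gsym: "G i j = G j i" for i j unfolding G_def by (simp add: mult.commute)
  define a where "a i = G i i" for i
  have a_sq: "a i = (\<Sum>k<r. (y i k)^2)" for i unfolding a_def G_def by (simp add: power2_eq_square)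
  have a_nn: "0 \<le> a i" for i unfolding a_sq by (intro sum_nonneg) simp
  have CS: "(G i j)^2 \<le> a i * a j" for i j
    unfolding G_def a_sq by (rule Cauchy_Schwarz_ineq_sum)
  have finS: "finite S" using S finite_subset by blast
  have cardS: "card S \<le> n" using S card_mono[of "{..<n}" S] by simp
  have c0: "c > 0" using c by simp
  have Qle: "(\<Sum>i\<in>S. \<Sum>j\<in>S. \<Sum>k\<in>S. q i j * q i k * q j k) \<le> real (card S) * c^2"
  proof -
    have "(\<Sum>i\<in>S. \<Sum>j\<in>S. \<Sum>k\<in>S. q i j * q i k * q j k)
        \<le> (\<Sum>i\<in>S. \<Sum>j\<in>S. \<Sum>k\<in>S. if i \<in> S then q i j * q i k else 0)"
    proof (intro sum_mono)
      fix i j k assume "i \<in> S"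
      have "q i j * q i k * q j k \<le> q i j * q i k * 1"
        using q_nn q_le1 by (intro mult_left_mono) auto
      thus "q i j * q i k * q j k \<le> (if i \<in> S then q i j * q i k else 0)" using \<open>i \<in> S\<close> by simp
    qed
    also have "\<dots> \<le> real (card {i\<in>S. i \<in> S}) * c^2"
      by (rule sum3_le_first[OF finS q_nn deg])
    finally show ?thesis by simp
  qed
  have \<Delta>c: "\<Delta> \<le> c^2"
  proof -
    have "\<Delta> * n \<le> real (card S) * c^2" using tri Qle by linarith
    also have "\<dots> \<le> real n * c^2" using cardS by (intro mult_right_mono) auto
    finally show ?thesis using n by (simp add: mult.commute)
  qed
  define t where "t = \<Delta> / (2 * c^2)"
  have t0: "t > 0" unfolding t_def using \<Delta> c0 by simp
  have c2p: "c^2 > 0" using c0 by simp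
  have h2: "\<Delta> \<le> 1 * (2 * c^2)" using \<Delta>c c2p by linarith
  have t1: "t \<le> 1" unfolding t_def using pos_divide_le_eq[of "2*c^2" \<Delta> 1] h2 c2p by simp
  have tc: "t * c^2 = \<Delta> / 2" unfolding t_def using c0 by (simp add: field_simps)
  define R where "R = {i\<in>S. t \<le> a i}"
  have finR: "finite R" unfolding R_def using finS by simp
  have qB: "q i j \<le> t" if "\<not> t \<le> a i" "\<not> t \<le> a j" "i \<in> S" "j \<in> S" for i j
  proof (cases "i = j")
    case True thus ?thesis using qdiag t0 by simp
  next
    case False
    show ?thesis
    proof (cases "G i j \<le> 0")
      case True thus ?thesis using qoff[OF that(3,4) False] t0 by simp
    next
      case Gp: False
      have "a i * a j \<le> t * t" using that a_nn t0 by (intro mult_mono) auto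
      hence "(G i j)^2 \<le> t^2" using CS[of i j] by (simp add: power2_eq_square)
      hence "G i j \<le> t" by (rule power2_le_imp_le[OF _ less_imp_le[OF t0]])
      thus ?thesis using qoff[OF that(3,4) False] t0 by (simp add: min_le_iff_disj)
    qed
  qed
  have pw: "q i j * q i k * q j k \<le> (if t \<le> a i then q i j * q i k else 0)
            + (if t \<le> a j then q j i * q j k else 0) + t * (q k i * q k j)"
    if ijk: "i \<in> S" "j \<in> S" "k \<in> S" for i j k
  proof -
    have A: "q i j * q i k * q j k \<le> q i j * q i k" using q_nn q_le1
      by (metis mult_left_mono mult.right_neutral mult_nonneg_nonneg)
    have B: "q i j * q i k * q j k \<le> q j i * q j k" using q_nn q_le1 q_sym
      by (metis mult_left_mono mult_right_mono mult.commute mult.left_neutral mult_nonneg_nonneg)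
    have nn1: "0 \<le> q i j * q i k" "0 \<le> q j i * q j k" "0 \<le> t * (q k i * q k j)"
      using q_nn t0 by auto
    show ?thesis
    proof (cases "t \<le> a i \<or> t \<le> a j")
      case True thus ?thesis using A B nn1 by auto
    next
      case False
      hence "q i j \<le> t" using qB ijk by auto
      hence "q i j * (q i k * q j k) \<le> t * (q i k * q j k)"
        using q_nn by (intro mult_right_mono) auto
      thus ?thesis using nn1 q_sym[of i k] q_sym[of j k] False by (auto simp: mult_ac)
    qed
  qed
  have sum1: "(\<Sum>i\<in>S. \<Sum>j\<in>S. \<Sum>k\<in>S. if t \<le> a i then q i j * q i k else 0) \<le> real (card R) * c^2"
    unfolding R_def by (rule sum3_le_first[OF finS q_nn deg])
  have sum2: "(\<Sum>i\<in>S. \<Sum>j\<in>S. \<Sum>k\<in>S. if t \<le> a j then q j i * q j k else 0) \<le> real (card R) * c^2"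
  proof -
    have "(\<Sum>i\<in>S. \<Sum>j\<in>S. \<Sum>k\<in>S. if t \<le> a j then q j i * q j k else 0)
        = (\<Sum>j\<in>S. \<Sum>i\<in>S. \<Sum>k\<in>S. if t \<le> a j then q j i * q j k else 0)"
      by (rule sum.swap)
    also have "\<dots> \<le> real (card R) * c^2"
      unfolding R_def by (rule sum3_le_first[OF finS q_nn deg])
    finally show ?thesis .
  qed
  have sum3: "(\<Sum>i\<in>S. \<Sum>j\<in>S. \<Sum>k\<in>S. t * (q k i * q k j)) \<le> t * (real (card S) * c^2)"
  proof -
    have "(\<Sum>i\<in>S. \<Sum>j\<in>S. \<Sum>k\<in>S. t * (q k i * q k j)) = t * (\<Sum>i\<in>S. \<Sum>j\<in>S. \<Sum>k\<in>S. q k i * q k j)"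
      by (simp add: sum_distrib_left)
    also have "(\<Sum>i\<in>S. \<Sum>j\<in>S. \<Sum>k\<in>S. q k i * q k j) = (\<Sum>i\<in>S. \<Sum>k\<in>S. \<Sum>j\<in>S. q k i * q k j)"
      by (rule sum.cong[OF refl], rule sum.swap)
    also have "\<dots> = (\<Sum>k\<in>S. \<Sum>i\<in>S. \<Sum>j\<in>S. q k i * q k j)"
      by (rule sum.swap)
    also have "\<dots> = (\<Sum>k\<in>S. \<Sum>i\<in>S. \<Sum>j\<in>S. if k \<in> S then q k i * q k j else 0)"
      by (intro sum.cong refl) auto
    also have "\<dots> \<le> real (card {k\<in>S. k \<in> S}) * c^2"
      by (rule sum3_le_first[OF finS q_nn deg])
    finally show ?thesis using t0 by (simp add: mult_left_mono)
  qed
  have "\<Delta> * n \<le> (\<Sum>i\<in>S. \<Sum>j\<in>S. \<Sum>k\<in>S. (if t \<le> a i then q i j * q i k else 0)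
            + (if t \<le> a j then q j i * q j k else 0) + t * (q k i * q k j))"
  proof -
    have "(\<Sum>i\<in>S. \<Sum>j\<in>S. \<Sum>k\<in>S. q i j * q i k * q j k) \<le> (\<Sum>i\<in>S. \<Sum>j\<in>S. \<Sum>k\<in>S. (if t \<le> a i then q i j * q i k else 0)
            + (if t \<le> a j then q j i * q j k else 0) + t * (q k i * q k j))"
      by (intro sum_mono) (rule pw)
    thus ?thesis using tri by linarith
  qed
  also have "\<dots> = (\<Sum>i\<in>S. \<Sum>j\<in>S. \<Sum>k\<in>S. if t \<le> a i then q i j * q i k else 0)
      + (\<Sum>i\<in>S. \<Sum>j\<in>S. \<Sum>k\<in>S. if t \<le> a j then q j i * q j k else 0)
      + (\<Sum>i\<in>S. \<Sum>j\<in>S. \<Sum>k\<in>S. t * (q k i * q k j))"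
    by (simp add: sum.distrib)
  finally have "\<Delta> * n \<le> 2 * (real (card R) * c^2) + t * (real (card S) * c^2)"
    using sum1 sum2 sum3 by linarith
  moreover have "t * (real (card S) * c^2) \<le> \<Delta> / 2 * n"
  proof -
    have "t * (real (card S) * c^2) = real (card S) * (\<Delta> / 2)" using tc by (simp add: mult_ac)
    also have "\<dots> \<le> real n * (\<Delta> / 2)" using cardS \<Delta> by (intro mult_right_mono) auto
    finally show ?thesis by (simp add: mult_ac)
  qed
  ultimately have Rbig: "\<Delta> * n \<le> 4 * (real (card R) * c^2)" by linarith
  have aR: "a i \<ge> t" if "i \<in> R" for i using that unfolding R_def by simp
  define z where "z i k = y i k / sqrt (a i)" for i k
  define N where "N i j = (\<Sum>k<r. z i k * z j k)" for i j
  have sa: "sqrt (a i) > 0" if "i \<in> R" for i using aR[OF that] t0 by simp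
  have N_eq: "N i j = G i j / (sqrt (a i) * sqrt (a j))" for i j
    unfolding N_def z_def G_def by (simp add: sum_divide_distrib)
  have zz: "(\<Sum>k<r. (z i k)^2) = 1" if "i \<in> R" for i
  proof -
    have "(\<Sum>k<r. (z i k)^2) = (\<Sum>k<r. (y i k)^2) / a i"
      unfolding z_def using a_nn[of i] by (simp add: power_divide sum_divide_distrib)
    thus ?thesis using a_sq[of i] sa[OF that] by simp
  qed
  have trI: "(\<Sum>i\<in>R. \<Sum>k<r. (z i k)^2)^2 \<le> real r * (\<Sum>i\<in>R. \<Sum>j\<in>R. (N i j)^2)"
    unfolding N_def by (rule trace_ineq[OF finR])
  hence tr2: "(real (card R))^2 \<le> real r * (\<Sum>i\<in>R. \<Sum>j\<in>R. (N i j)^2)"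
    using zz by simp
  have Nabs: "\<bar>N i j\<bar> \<le> 1" if "i \<in> R" "j \<in> R" for i j
  proof -
    have "(N i j)^2 = (G i j)^2 / (a i * a j)"
      unfolding N_eq using a_nn[of i] a_nn[of j] by (simp add: power_divide power_mult_distrib)
    also have "\<dots> \<le> 1" using CS[of i j] sa[OF that(1)] sa[OF that(2)] a_nn[of i] a_nn[of j]
      by (simp add: divide_le_eq_1)
    finally show ?thesis by (simp add: abs_square_le_1)
  qed
  have Nsq: "(N i j)^2 \<le> 2 * max 0 (N i j) - N i j" if "i \<in> R" "j \<in> R" for i j
  proof (cases "N i j \<ge> 0")
    case True
    have "N i j * N i j \<le> N i j * 1" using Nabs[OF that] True by (intro mult_left_mono) auto
    thus ?thesis using True by (simp add: power2_eq_square)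
  next
    case False
    have "(- N i j) * (- N i j) \<le> (- N i j) * 1" using Nabs[OF that] False by (intro mult_left_mono) auto
    thus ?thesis using False by (simp add: power2_eq_square)
  qed
  have Nsum: "0 \<le> (\<Sum>i\<in>R. \<Sum>j\<in>R. N i j)"
  proof -
    have "(\<Sum>i\<in>R. \<Sum>j\<in>R. N i j) = (\<Sum>i\<in>R. \<Sum>j\<in>R. \<Sum>k<r. z i k * z j k)" unfolding N_def ..
    also have "\<dots> = (\<Sum>i\<in>R. \<Sum>k<r. \<Sum>j\<in>R. z i k * z j k)"
      by (rule sum.cong[OF refl], rule sum.swap)
    also have "\<dots> = (\<Sum>k<r. \<Sum>i\<in>R. \<Sum>j\<in>R. z i k * z j k)" by (rule sum.swap)
    also have "\<dots> = (\<Sum>k<r. (\<Sum>i\<in>R. z i k)^2)"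
      by (simp add: power2_eq_square sum_product)
    finally show ?thesis by (simp add: sum_nonneg)
  qed
  have Npos: "max 0 (N i j) \<le> of_bool (i = j) + q i j / t" if "i \<in> R" "j \<in> R" for i j
  proof (cases "i = j")
    case True
    have ai: "a i > 0" using aR[OF that(1)] t0 by simp
    have Gii: "G i i = a i" unfolding a_def by simp
    have ss: "sqrt (a i) * sqrt (a i) = a i" using a_nn[of i] by simp
    have "N i i = G i i / (sqrt (a i) * sqrt (a i))" by (rule N_eq)
    also have "\<dots> = 1" unfolding Gii ss using ai by simp
    finally have "N i i = 1" .
    thus ?thesis using True qdiag by simp
  next
    case False
    have qn: "0 \<le> q i j / t" using q_nn t0 by simp
    show ?thesis
    proof (cases "G i j \<le> 0")
      case True
      have "N i j \<le> 0" unfolding N_eq using True sa[OF that(1)] sa[OF that(2)]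
        by (simp add: divide_nonpos_pos)
      thus ?thesis using qn by simp
    next
      case Gp: False
      show ?thesis
      proof (cases "G i j \<ge> 1")
        case True
        hence "q i j = 1" using qoff[OF _ _ False] that unfolding R_def by simp
        hence "1 \<le> q i j / t" using t0 t1 by simp
        thus ?thesis using Nabs[OF that] False by simp
      next
        case G1: False
        hence qG: "q i j = G i j" using qoff[OF _ _ False] that Gp unfolding R_def by simp
        have st: "t \<le> sqrt (a i) * sqrt (a j)"
        proof -
          have "t * t \<le> a i * a j" using aR[OF that(1)] aR[OF that(2)] t0 by (intro mult_mono) auto
          hence "sqrt (t * t) \<le> sqrt (a i * a j)" by (rule real_sqrt_le_mono)
          thus ?thesis using t0 by (simp add: real_sqrt_mult)
        qed
        have "N i j = G i j / (sqrt (a i) * sqrt (a j))" by (rule N_eq)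
        also have "\<dots> \<le> G i j / t" using st t0 Gp by (intro divide_left_mono) auto
        finally show ?thesis using qG Gp t0 False by simp
      qed
    qed
  qed
  have rowR: "(\<Sum>j\<in>R. of_bool (i = j) + q i j / t) \<le> 1 + c / t" if "i \<in> R" for i
  proof -
    have "(\<Sum>j\<in>R. of_bool (i = j) + q i j / t) = (\<Sum>j\<in>R. (of_bool (i = j) :: real)) + (\<Sum>j\<in>R. q i j) / t"
      by (simp add: sum.distrib sum_divide_distrib)
    also have "(\<Sum>j\<in>R. (of_bool (i = j) :: real)) = 1" using that finR by simp
    also have "(\<Sum>j\<in>R. q i j) \<le> (\<Sum>j\<in>S. q i j)"
      using finS q_nn unfolding R_def by (intro sum_mono2) auto
    also have "\<dots> \<le> c" using deg that unfolding R_def by simp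
    finally show ?thesis using t0 by (simp add: divide_right_mono)
  qed
  have F: "(\<Sum>i\<in>R. \<Sum>j\<in>R. (N i j)^2) \<le> 4 * real (card R) * c / t"
  proof -
    have "(\<Sum>i\<in>R. \<Sum>j\<in>R. (N i j)^2) \<le> (\<Sum>i\<in>R. \<Sum>j\<in>R. 2 * max 0 (N i j) - N i j)"
      using Nsq by (intro sum_mono) auto
    also have "\<dots> = 2 * (\<Sum>i\<in>R. \<Sum>j\<in>R. max 0 (N i j)) - (\<Sum>i\<in>R. \<Sum>j\<in>R. N i j)"
      by (simp add: sum_subtractf sum_distrib_left)
    also have "\<dots> \<le> 2 * (\<Sum>i\<in>R. \<Sum>j\<in>R. max 0 (N i j))" using Nsum by simp
    also have "(\<Sum>i\<in>R. \<Sum>j\<in>R. max 0 (N i j)) \<le> (\<Sum>i\<in>R. 1 + c / t)"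
    proof (intro sum_mono)
      fix i assume i: "i \<in> R"
      have "(\<Sum>j\<in>R. max 0 (N i j)) \<le> (\<Sum>j\<in>R. of_bool (i = j) + q i j / t)"
        using Npos[OF i] by (intro sum_mono) auto
      also have "\<dots> \<le> 1 + c / t" by (rule rowR[OF i])
      finally show "(\<Sum>j\<in>R. max 0 (N i j)) \<le> 1 + c / t" .
    qed
    also have "(\<Sum>i\<in>R. 1 + c / t) = real (card R) * (1 + c / t)" by simp
    finally have "(\<Sum>i\<in>R. \<Sum>j\<in>R. (N i j)^2) \<le> 2 * (real (card R) * (1 + c / t))" by simp
    moreover have "1 \<le> c / t" using c t0 t1 by (simp add: le_divide_eq)
    hence "real (card R) * (1 + c / t) \<le> real (card R) * (2 * (c / t))"
      by (intro mult_left_mono) auto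
    moreover have "4 * real (card R) * c / t = 2 * (real (card R) * (2 * (c / t)))"
      by simp
    ultimately show ?thesis by linarith
  qed
  have Rsmall: "real (card R) * t \<le> 4 * real r * c"
  proof (cases "card R = 0")
    case True thus ?thesis using c by simp
  next
    case False
    have "(real (card R))^2 \<le> real r * (4 * real (card R) * c / t)"
      using order_trans[OF tr2 mult_left_mono[OF F]] by simp
    hence "real (card R) * real (card R) * t \<le> real (card R) * (4 * real r * c)"
      using t0 by (simp add: power2_eq_square field_simps)
    thus ?thesis using False by (simp add: mult.assoc)
  qed
  have "\<Delta> * n * t \<le> 4 * (real (card R) * c^2) * t"
    using mult_right_mono[OF Rbig less_imp_le[OF t0]] .
  also have "\<dots> = 4 * (real (card R) * t) * c^2" by (simp add: mult_ac)
  also have "\<dots> \<le> 4 * (4 * real r * c) * c^2"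
  proof -
    have "(real (card R) * t) * c^2 \<le> (4 * real r * c) * c^2" by (rule mult_right_mono[OF Rsmall]) simp
    thus ?thesis by linarith
  qed
  also have "\<dots> = 16 * real r * c^3" by (simp add: power2_eq_square power3_eq_cube)
  finally have X: "\<Delta> * n * t \<le> 16 * real r * c^3" .
  have e1: "\<Delta> * n * t * (2 * c^2) = \<Delta>^2 * n" unfolding t_def using c0 by (simp add: power2_eq_square)
  have c5: "c^5 = c^3 * c^2" using power_add[of c 3 2] by simp
  have "\<Delta>^2 * n \<le> 16 * real r * c^3 * (2 * c^2)"
    unfolding e1[symmetric] by (rule mult_right_mono[OF X]) simp
  also have "\<dots> = 32 * real r * c^5" unfolding c5 by simp
  finally have "\<Delta>^2 * n \<le> 32 * real r * c^5" .
  thus ?thesis using \<Delta>c by (simp add: mult_ac)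
qed




theorem theorem1:
  "\<exists>\<alpha>::real. \<alpha> > 0 \<and>
     (\<forall>(c::real) (\<Delta>::real) (n::nat) (d::nat) (V::real mat).
        c > 4 \<longrightarrow> \<Delta> > 0 \<longrightarrow> n \<ge> 2 \<longrightarrow> V \<in> carrier_mat d n \<longrightarrow>
        measure_pmf.expectation (graph_pmf V)
           (\<lambda>E. real (card (triangles_in E (low_degree_set V c)))) \<ge> \<Delta> * real n \<longrightarrow>
        real (vec_space.rank d V) \<ge> \<alpha> * (\<Delta> ^ 4 / c ^ 9) * (real n / (log 2 (real n)) ^ 2))"
proof (intro exI[of _ "1/32"] conjI allI impI)
  show "(0::real) < 1/32" by simp
  fix c \<Delta> :: real and n d :: nat and V :: "real mat"
  assume c4: "c > 4" and \<Delta>0: "\<Delta> > 0" and n2: "n \<ge> 2" and V: "V \<in> carrier_mat d n"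
    and hyp: "measure_pmf.expectation (graph_pmf V)
           (\<lambda>E. real (card (triangles_in E (low_degree_set V c)))) \<ge> \<Delta> * real n"
  have dc: "dim_col V = n" using V by simp
  define S where "S = low_degree_set V c"
  have S: "S \<subseteq> {..<n}" unfolding S_def low_degree_set_def using dc by auto
  define q where "q i j = (if i = j then 0 else edge_prob V i j)" for i j
  obtain r y where r: "r \<le> vec_space.rank d V"
    and rep: "\<forall>i<n. \<forall>j<n. col V i \<bullet> col V j = (\<Sum>k<r. y i k * y j k)"
    using rank_gram[OF V] by blast
  define G where "G i j = (\<Sum>k<r. y i k * y j k)" for i j
  have G_def': "\<And>i j. G i j = (\<Sum>k<r. y i k * y j k)" unfolding G_def by simp
  have qoff: "q i j = max 0 (min (G i j) 1)" if "i \<in> S" "j \<in> S" "i \<noteq> j" for i j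
  proof -
    have "i < n" "j < n" using that S by auto
    hence "col V i \<bullet> col V j = G i j" using rep unfolding G_def by simp
    thus ?thesis using that unfolding q_def edge_prob_def by simp
  qed
  have q_sym: "q i j = q j i" for i j unfolding q_def using ep_sym by simp
  have q_nn: "0 \<le> q i j" for i j unfolding q_def using ep_bounds by simp
  have q_le1: "q i j \<le> 1" for i j unfolding q_def using ep_bounds by simp
  have qdiag: "q i i = 0" for i unfolding q_def by simp
  have deg: "(\<Sum>j\<in>S. q i j) \<le> c" if i: "i \<in> S" for i
  proof -
    have iN: "i < n" using i S by auto
    have "(\<Sum>j\<in>S. q i j) \<le> (\<Sum>j\<in>{..<n}. q i j)"
      using S q_nn by (intro sum_mono2) auto
    also have "\<dots> = (\<Sum>j\<in>{..<n} - {i}. q i j)"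
      using iN qdiag by (simp add: sum_diff1)
    also have "\<dots> = (\<Sum>j\<in>{..<n} - {i}. edge_prob V i j)"
      unfolding q_def by (intro sum.cong) auto
    also have "\<dots> = expected_degree V i" using exp_deg[of i V] iN dc by simp
    also have "\<dots> \<le> c" using i unfolding S_def low_degree_set_def by simp
    finally show ?thesis .
  qed
  have tri: "\<Delta> * n \<le> (\<Sum>i\<in>S. \<Sum>j\<in>S. \<Sum>k\<in>S. q i j * q i k * q j k)"
  proof -
    have "\<Delta> * n \<le> measure_pmf.expectation (graph_pmf V) (\<lambda>E. real (card (triangles_in E S)))"
      using hyp unfolding S_def by simp
    also have "\<dots> \<le> (\<Sum>i\<in>S. \<Sum>j\<in>S. \<Sum>k\<in>S. (if i = j then 0 else edge_prob V i j) *
           (if i = k then 0 else edge_prob V i k) * (if j = k then 0 else edge_prob V j k))"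
      using exp_tri[of S V] S dc by simp
    also have "\<dots> = (\<Sum>i\<in>S. \<Sum>j\<in>S. \<Sum>k\<in>S. q i j * q i k * q j k)" unfolding q_def ..
    finally show ?thesis .
  qed
  have c1: "c \<ge> 1" using c4 by simp
  have n0: "n > 0" using n2 by simp
  have mb: "\<Delta> \<le> c^2 \<and> \<Delta>^2 * n \<le> 32 * c^5 * r"
    by (rule main_bound[OF G_def' S c1 \<Delta>0 n0 qdiag qoff q_sym q_nn q_le1 deg tri])
  hence \<Delta>c: "\<Delta> \<le> c^2" and main: "\<Delta>^2 * n \<le> 32 * c^5 * r" by auto
  have c0: "c > 0" using c4 by simp
  have L: "1 \<le> (log 2 (real n))^2"
  proof -
    have "log 2 2 \<le> log 2 (real n)" using n2 by (subst log_le_cancel_iff) auto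
    hence "1 \<le> log 2 (real n)" by simp
    thus ?thesis by (simp add: one_le_power)
  qed
  have A: "real n / (log 2 (real n))^2 \<le> real n"
  proof -
    have "real n / (log 2 (real n))^2 \<le> real n / 1"
      using L by (intro divide_left_mono) auto
    thus ?thesis by simp
  qed
  have B: "\<Delta>^4 / c^9 \<le> \<Delta>^2 / c^5"
  proof -
    have "\<Delta>^2 \<le> (c^2)^2" using \<Delta>c \<Delta>0 by (intro power_mono) auto
    hence "\<Delta>^2 * \<Delta>^2 \<le> \<Delta>^2 * c^4" by (intro mult_left_mono) (auto simp: power_mult[symmetric])
    hence "\<Delta>^4 \<le> \<Delta>^2 * c^4" by (simp add: power_add[symmetric])
    hence "\<Delta>^4 / c^9 \<le> \<Delta>^2 * c^4 / c^9" using c0 by (intro divide_right_mono) auto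
    also have "\<Delta>^2 * c^4 / c^9 = \<Delta>^2 / c^5"
    proof -
      have e: "c^9 = c^4 * c^5" using power_add[of c 4 5] by simp
      have "\<Delta>^2 * c^4 / (c^4 * c^5) = \<Delta>^2 / c^5" using c0 by (simp add: field_simps)
      thus ?thesis unfolding e .
    qed
    finally show ?thesis .
  qed
  have "1/32 * (\<Delta> ^ 4 / c ^ 9) * (real n / (log 2 (real n)) ^ 2) \<le> 1/32 * (\<Delta>^2 / c^5) * real n"
  proof -
    have p1: "0 \<le> \<Delta>^4 / c^9" using c0 \<Delta>0 by simp
    have p2: "0 \<le> 1/32 * (\<Delta>^2 / c^5)" using c0 \<Delta>0 by simp
    have p3: "0 \<le> real n / (log 2 (real n))^2" by simp
    have "1/32 * (\<Delta> ^ 4 / c ^ 9) \<le> 1/32 * (\<Delta>^2 / c^5)" using B by simp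
    thus ?thesis using A p1 p2 p3 by (intro mult_mono) auto
  qed
  also have "\<dots> = \<Delta>^2 * n / (32 * c^5)" by simp
  also have "\<dots> \<le> real r" using main c0 by (simp add: divide_le_eq mult_ac)
  also have "\<dots> \<le> real (vec_space.rank d V)" using r by simp
  finally show "1/32 * (\<Delta> ^ 4 / c ^ 9) * (real n / (log 2 (real n)) ^ 2) \<le> real (vec_space.rank d V)" .
qed


end
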